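(* For every integer $n \geq 9$, there exists a separating union-closed family $\mathcal{A}$ with base set $[n]$, height $h=5$ and $|\mathcal{B}(\mathcal{A})|=1$ such that \[\mathrm{Avg}(\mathcal{A}) = \frac{\sum_{A \in \mathcal{A}}|A|}{|\mathcal{A}|} < \frac{n}{2}.\]
   Context: A family of sets $\mathcal{A}$ is union-closed if it is a finite family of distinct finite sets with at least one nonempty member set, and $X,Y\in\mathcal{A}$ implies $X\cup Y\in\mathcal{A}$ (the empty set may be a member). For a family $\mathcal{F}$, $b(\mathcal{F})=\bigcup_{F\in\mathcal{F}}F$; the base set $b(\mathcal{A})$ is denoted $[n]=\{1,\dots,n\}$. $\mathcal{A}$ is separating if for any two distinct $x,y\in[n]$ there is $A\in\mathcal{A}$ containing exactly one of $x,y$. A chain in $\mathcal{A}$ is a subfamily any two distinct members of which are comparable under proper inclusion; the height $h$ of $\mathcal{A}$ is the maximum size of a chain in $\mathcal{A}$. For real $x\ge 0$, $\mathcal{A}_{<x}=\{A\in\mathcal{A} : |A|<x\}$. For $\mathcal{S}\subseteq\mathcal{A}$ and $S\in\mathcal{S}$, $\mathrm{irr}_{\mathcal{S}}(S)=\{s\in S : s\notin b(\mathcal{S}\setminus\{S\})\}$, and $\mathcal{S}$ is irredundant if $\mathrm{irr}_{\mathcal{S}}(S)\neq\emptyset$ for every $S\in\mathcal{S}$. Set $B=b(\mathcal{A}_{<n/2})$, and let $\mathcal{B}(\mathcal{A})$ denote any irredundant subfamily of $\mathcal{A}_{<n/2}$ of minimum size such that $b(\mathcal{B}(\mathcal{A}))=B$.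 *)

theory Defs
  imports Complex_Main
begin

definition base_set :: "'a set set \<Rightarrow> 'a set" where
  "base_set F = \<Union>F"

definition union_closed :: "'a set set \<Rightarrow> bool" where
  "union_closed A \<longleftrightarrow> finite A \<and> (\<forall>X\<in>A. finite X) \<and> (\<exists>X\<in>A. X \<noteq> {}) \<and>
     (\<forall>X\<in>A. \<forall>Y\<in>A. X \<union> Y \<in> A)"

definition separating :: "'a set set \<Rightarrow> bool" where
  "separating A \<longleftrightarrow> (\<forall>x\<in>base_set A. \<forall>y\<in>base_set A. x \<noteq> y \<longrightarrow>
     (\<exists>S\<in>A. (x \<in> S \<and> y \<notin> S) \<or> (y \<in> S \<and> x \<notin> S)))"

definition is_chain_in :: "'a set set \<Rightarrow> 'a set set \<Rightarrow> bool" where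
  "is_chain_in C A \<longleftrightarrow> C \<subseteq> A \<and> (\<forall>X\<in>C. \<forall>Y\<in>C. X \<noteq> Y \<longrightarrow> X \<subset> Y \<or> Y \<subset> X)"

definition height :: "'a set set \<Rightarrow> nat" where
  "height A = Max {card C | C. is_chain_in C A}"

definition small_sets :: "'a set set \<Rightarrow> real \<Rightarrow> 'a set set" where
  "small_sets A x = {S\<in>A. real (card S) < x}"

definition irr :: "'a set set \<Rightarrow> 'a set \<Rightarrow> 'a set" where
  "irr S X = {s\<in>X. s \<notin> base_set (S - {X})}"

definition irredundant :: "'a set set \<Rightarrow> bool" where
  "irredundant S \<longleftrightarrow> (\<forall>X\<in>S. irr S X \<noteq> {})"

definition B_set :: "'a set set \<Rightarrow> 'a set" where
  "B_set A = base_set (small_sets A (real (card (base_set A)) / 2))"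

(* |B(A)|: the minimum size of an irredundant subfamily of A_{<n/2} whose union is B *)
definition B_size :: "'a set set \<Rightarrow> nat" where
  "B_size A = (LEAST k. \<exists>S. S \<subseteq> small_sets A (real (card (base_set A)) / 2) \<and>
       irredundant S \<and> base_set S = B_set A \<and> card S = k)"

definition avg_size :: "'a set set \<Rightarrow> real" where
  "avg_size A = (\<Sum>X\<in>A. real (card X)) / real (card A)"

end

theory Submission
  imports Defs
begin


definition SmF :: "nat \<Rightarrow> nat set set" where
  "SmF k = {S. S \<subseteq> {1..k} \<and> k - 2 \<le> card S}"

definition LgF :: "nat \<Rightarrow> nat \<Rightarrow> nat set set" where
  "LgF n k = (\<lambda>c. {1..n} - {c}) ` {k+1..<n}"

definition AF :: "nat \<Rightarrow> nat \<Rightarrow> nat set set" where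
  "AF n k = SmF k \<union> LgF n k \<union> {{1..n}}"

lemma SmF_sub: "S \<in> SmF k \<Longrightarrow> S \<subseteq> {1..k}"
  by (simp add: SmF_def)

lemma SmF_card: "S \<in> SmF k \<Longrightarrow> card S \<le> k"
  by (metis SmF_sub card_atLeastAtMost card_mono finite_atLeastAtMost diff_Suc_1)

lemma LgF_card: "X \<in> LgF n k \<Longrightarrow> card X = n - 1"
  by (auto simp: LgF_def)

lemma AF_sub: "k < n \<Longrightarrow> X \<in> AF n k \<Longrightarrow> X \<subseteq> {1..n}"
  by (auto simp: AF_def LgF_def SmF_def)

lemma AF_finite: "k < n \<Longrightarrow> finite (AF n k)"
proof -
  assume "k < n"
  then have "AF n k \<subseteq> Pow {1..n}" using AF_sub by blast
  then show ?thesis by (rule finite_subset) simp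
qed

lemma AF_union:
  assumes "k < n" "X \<in> AF n k" "Y \<in> AF n k"
  shows "X \<union> Y \<in> AF n k"
proof -
  have top: "Z \<union> {1..n} = {1..n}" "{1..n} \<union> Z = {1..n}" if "Z \<in> AF n k" for Z
    using AF_sub[OF assms(1) that] by auto
  consider "X \<in> SmF k" | "X \<in> LgF n k" | "X = {1..n}" using assms(2) by (auto simp: AF_def)
  then show ?thesis
  proof cases
    case 1
    note X = this
    consider "Y \<in> SmF k" | "Y \<in> LgF n k" | "Y = {1..n}" using assms(3) by (auto simp: AF_def)
    then show ?thesis
    proof cases
      case 1
      have "card X \<le> card (X \<union> Y)" by (rule card_mono) (use SmF_sub[OF 1] SmF_sub[OF X] finite_subset in \<open>auto\<close>)
      then have "X \<union> Y \<in> SmF k" using X 1 by (auto simp: SmF_def)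
      then show ?thesis by (simp add: AF_def)
    next
      case 2
      then obtain c where c0: "c \<in> {k+1..<n}" and c2: "Y = {1..n} - {c}" using 2 unfolding LgF_def by blast
      have c: "k < c" "Y = {1..n} - {c}" using c0 c2 by auto
      have "X \<union> Y = Y" using SmF_sub[OF X] c(1) assms(1) unfolding c(2) by fastforce
      then show ?thesis using assms(3) by (simp only:)
    next
      case 3 then show ?thesis using top assms by simp
    qed
  next
    case 2
    then obtain c where c0: "c \<in> {k+1..<n}" and c2: "X = {1..n} - {c}" using 2 unfolding LgF_def by blast
      have c: "k < c" "X = {1..n} - {c}" using c0 c2 by auto
    consider "Y \<in> SmF k" | "Y \<in> LgF n k" | "Y = {1..n}" using assms(3) by (auto simp: AF_def)
    then show ?thesis
    proof cases
      case 1
      have "X \<union> Y = X" using SmF_sub[OF 1] c(1) assms(1) unfolding c(2) by fastforce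
      then show ?thesis using assms(2) by (simp only:)
    next
      case 2
      then obtain d where d0: "d \<in> {k+1..<n}" and d2: "Y = {1..n} - {d}" using 2 unfolding LgF_def by blast
      have d: "k < d" "Y = {1..n} - {d}" using d0 d2 by auto
      show ?thesis
      proof (cases "c = d")
        case True then show ?thesis using c d assms(2) by simp
      next
        case False
        then have "X \<union> Y = {1..n}" using c d by auto
        then show ?thesis by (simp add: AF_def)
      qed
    next
      case 3 then show ?thesis using top assms by simp
    qed
  next
    case 3 then show ?thesis using top assms by simp
  qed
qed

lemma AF_uc:
  assumes "k < n" "1 \<le> n"
  shows "union_closed (AF n k)"
  unfolding union_closed_def
proof (intro conjI ballI)
  show "finite (AF n k)" using AF_finite[OF assms(1)] .
  show "finite X" if "X \<in> AF n k" for X using AF_sub[OF assms(1) that] finite_subset by blast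
  show "\<exists>X\<in>AF n k. X \<noteq> {}" using assms(2) by (intro bexI[of _ "{1..n}"]) (auto simp: AF_def)
  show "X \<union> Y \<in> AF n k" if "X \<in> AF n k" "Y \<in> AF n k" for X Y using AF_union assms that by blast
qed

lemma AF_base:
  assumes "k < n"
  shows "base_set (AF n k) = {1..n}"
  using AF_sub[OF assms] by (auto simp: base_set_def AF_def)

lemma SmF_mem: "S \<subseteq> {1..k} \<Longrightarrow> k - 2 \<le> card S \<Longrightarrow> S \<in> AF n k"
  by (simp add: AF_def SmF_def)

lemma LgF_mem: "k < c \<Longrightarrow> c < n \<Longrightarrow> {1..n} - {c} \<in> AF n k"
  by (auto simp: AF_def LgF_def)

lemma AF_sep:
  assumes "2 \<le> k" "k < n"
  shows "separating (AF n k)"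
  unfolding separating_def AF_base[OF assms(2)]
proof (intro ballI impI)
  fix x y assume x: "x \<in> {1..n}" and y: "y \<in> {1..n}" and xy: "x \<noteq> y"
  show "\<exists>S\<in>AF n k. x \<in> S \<and> y \<notin> S \<or> y \<in> S \<and> x \<notin> S"
  proof (cases "k < x \<and> x < n")
    case True
    then show ?thesis using LgF_mem[of k x n] x y xy by (intro bexI[of _ "{1..n} - {x}"]) auto
  next
    case nx: False
    show ?thesis
    proof (cases "k < y \<and> y < n")
      case True
      then show ?thesis using LgF_mem[of k y n] x y xy by (intro bexI[of _ "{1..n} - {y}"]) auto
    next
      case ny: False
      show ?thesis
      proof (cases "x \<le> k \<and> y \<le> k")
        case True
        have "card ({1..k} - {y}) = k - 1" using True y by simp
        then have "{1..k} - {y} \<in> AF n k" by (intro SmF_mem) auto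
        then show ?thesis using True x y xy by (intro bexI[of _ "{1..k} - {y}"]) auto
      next
        case False
        have "{1..k} \<in> AF n k" by (intro SmF_mem) auto
        then show ?thesis using False nx ny x y xy assms by (intro bexI[of _ "{1..k}"]) auto
      qed
    qed
  qed
qed




lemma AF_card_vals:
  assumes "k < n" "X \<in> AF n k"
  shows "card X \<in> {k-2, k-1, k, n-1, n}"
proof -
  consider "X \<in> SmF k" | "X \<in> LgF n k" | "X = {1..n}" using assms(2) by (auto simp: AF_def)
  then show ?thesis
  proof cases
    case 1
    then have "k - 2 \<le> card X" "card X \<le> k" using SmF_card by (auto simp: SmF_def)
    then show ?thesis by auto
  next
    case 2 then show ?thesis using LgF_card by auto
  qed simp
qed

lemma AF_chain_le:
  assumes "k < n" "is_chain_in C (AF n k)"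
  shows "card C \<le> 5"
proof -
  have sub: "C \<subseteq> AF n k" using assms(2) by (simp add: is_chain_in_def)
  have fin: "finite C" using finite_subset[OF sub AF_finite[OF assms(1)]] .
  have finX: "finite X" if "X \<in> C" for X using AF_sub[OF assms(1)] sub that finite_subset by blast
  have inj: "inj_on card C"
  proof (rule inj_onI)
    fix X Y assume XY: "X \<in> C" "Y \<in> C" "card X = card Y"
    show "X = Y"
    proof (rule ccontr)
      assume "X \<noteq> Y"
      then have "X \<subset> Y \<or> Y \<subset> X" using assms(2) XY by (auto simp: is_chain_in_def)
      then have "card X < card Y \<or> card Y < card X"
        using psubset_card_mono finX XY by blast
      then show False using XY by simp
    qed
  qed
  have "card ` C \<subseteq> {k-2, k-1, k, n-1, n}" using AF_card_vals[OF assms(1)] sub by blast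
  then have "card (card ` C) \<le> card {k-2, k-1, k, n-1, n}" by (intro card_mono) auto
  also have "\<dots> \<le> 5"
  proof -
    have "{k-2, k-1, k, n-1, n} = set [k-2, k-1, k, n-1, n]" by simp
    then show ?thesis using card_length[of "[k-2, k-1, k, n-1, n]"] by simp
  qed
  finally show ?thesis using card_image[OF inj] by simp
qed

lemma AF_chain_ex:
  assumes "4 \<le> k" "k + 1 < n"
  shows "is_chain_in {{3..k}, {2..k}, {1..k}, {1..n} - {k+1}, {1..n}} (AF n k) \<and>
         card {{3..k}, {2..k}, {1..k}, {1..n} - {k+1}, {1..n}} = 5"
proof -
  let ?Ch = "{{3..k}, {2..k}, {1..k}, {1..n} - {k+1}, {1..n::nat}}"
  have m1: "{3..k} \<in> AF n k" by (intro SmF_mem) auto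
  have m2: "{2..k} \<in> AF n k" by (intro SmF_mem) auto
  have m3: "{1..k} \<in> AF n k" by (intro SmF_mem) auto
  have m4: "{1..n} - {k+1} \<in> AF n k" using assms by (intro LgF_mem) auto
  have m5: "{1..n} \<in> AF n k" by (simp add: AF_def)
  have s1: "{3..k} \<subset> {2..k}"
  proof -
    have "{3..k} \<subseteq> {2..k}" by auto
    moreover have "2 \<in> {2..k}" "2 \<notin> {3..k}" using assms by auto
    ultimately show ?thesis by blast
  qed
  have s2: "{2..k} \<subset> {1..k}"
  proof -
    have "{2..k} \<subseteq> {1..k}" by auto
    moreover have "1 \<in> {1..k}" "1 \<notin> {2..k}" using assms by auto
    ultimately show ?thesis by blast
  qed
  have s3: "{1..k} \<subset> {1..n} - {k+1}"
  proof -
    have "{1..k} \<subseteq> {1..n} - {k+1}" using assms by auto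
    moreover have "n \<in> {1..n} - {k+1}" "n \<notin> {1..k}" using assms by auto
    ultimately show ?thesis by blast
  qed
  have s4: "{1..n} - {k+1} \<subset> {1..n}"
  proof -
    have "k+1 \<in> {1..n}" using assms by simp
    then show ?thesis by blast
  qed
  have ch: "is_chain_in ?Ch (AF n k)"
    unfolding is_chain_in_def
  proof (intro conjI ballI impI)
    show "?Ch \<subseteq> AF n k" using m1 m2 m3 m4 m5 by simp
  next
    have s13: "{3..k} \<subset> {1..k}" using s1 s2 by (rule psubset_trans)
    have s14: "{3..k} \<subset> {1..n} - {k+1}" using s13 s3 by (rule psubset_trans)
    have s15: "{3..k} \<subset> {1..n}" using s14 s4 by (rule psubset_trans)
    have s24: "{2..k} \<subset> {1..n} - {k+1}" using s2 s3 by (rule psubset_trans)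
    have s25: "{2..k} \<subset> {1..n}" using s24 s4 by (rule psubset_trans)
    have s35: "{1..k} \<subset> {1..n}" using s3 s4 by (rule psubset_trans)
    fix X Y assume "X \<in> ?Ch" "Y \<in> ?Ch" "X \<noteq> Y"
    then show "X \<subset> Y \<or> Y \<subset> X"
      using s1 s2 s3 s4 s13 s14 s15 s24 s25 s35
      by (elim insertE emptyE; simp only: simp_thms)
  qed
  have "card ` ?Ch = {k-2, k-1, k, n-1, n}" using assms by simp
  moreover have "card {k-2, k-1, k, n-1, n} = 5" using assms by (simp add: card_insert_if; arith)
  ultimately have ge: "5 \<le> card ?Ch" by (metis card_image_le finite.emptyI finite.insertI)
  have le: "card ?Ch \<le> 5" using AF_chain_le[OF _ ch] assms by linarith
  have "card ?Ch = 5" using ge le by (rule antisym[rotated])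
  then show ?thesis by (rule conjI[OF ch])
qed




lemma AF_height:
  assumes "4 \<le> k" "k + 1 < n"
  shows "height (AF n k) = 5"
  unfolding height_def
proof (rule Max_eqI)
  have le: "y \<le> 5" if y: "y \<in> {card C |C. is_chain_in C (AF n k)}" for y
  proof -
    obtain C where "y = card C" "is_chain_in C (AF n k)" using y by blast
    then show ?thesis using AF_chain_le[of k n C] assms by linarith
  qed
  then have "{card C |C. is_chain_in C (AF n k)} \<subseteq> {..5}" by blast
  then show "finite {card C |C. is_chain_in C (AF n k)}" by (rule finite_subset) simp
  show "y \<le> 5" if "y \<in> {card C |C. is_chain_in C (AF n k)}" for y using le that .
  obtain Ch where "is_chain_in Ch (AF n k)" "card Ch = 5" using AF_chain_ex[OF assms] by blast
  then show "5 \<in> {card C |C. is_chain_in C (AF n k)}" by (auto intro!: exI[of _ Ch])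
qed

lemma AF_small:
  assumes "2 * k < n" "4 \<le> k"
  shows "small_sets (AF n k) (real (card (base_set (AF n k))) / 2) = SmF k"
proof -
  have kn: "k < n" using assms by simp
  have b: "real (card (base_set (AF n k))) / 2 = real n / 2" using AF_base[OF kn] by simp
  show ?thesis unfolding b small_sets_def
  proof (intro equalityI subsetI)
    fix X assume "X \<in> {S \<in> AF n k. real (card S) < real n / 2}"
    then have X: "X \<in> AF n k" "real (card X) < real n / 2" by auto
    consider "X \<in> SmF k" | "X \<in> LgF n k" | "X = {1..n}" using X(1) by (auto simp: AF_def)
    then show "X \<in> SmF k"
    proof cases
      case 2 then have "card X = n - 1" by (rule LgF_card)
      moreover have "n \<ge> 1" using assms by simp
      ultimately have "real (card X) = real n - 1" by (simp add: of_nat_diff)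
      have "real n \<ge> 9" using assms by simp
      then have False using X(2) \<open>real (card X) = real n - 1\<close> by linarith
      then show ?thesis ..
    next
      case 3 then show ?thesis using X(2) by simp
    qed
  next
    fix X assume X: "X \<in> SmF k"
    then have "card X \<le> k" by (rule SmF_card)
    then have "real (card X) < real n / 2" using assms by simp
    then show "X \<in> {S \<in> AF n k. real (card S) < real n / 2}" using X by (simp add: AF_def)
  qed
qed

lemma SmF_union: "2 \<le> k \<Longrightarrow> \<Union>(SmF k) = {1..k}"
proof -
  assume "2 \<le> k"
  have "{1..k} \<in> SmF k" by (simp add: SmF_def)
  then show ?thesis using SmF_sub by blast
qed

lemma AF_Bsize:
  assumes "4 \<le> k" "2 * k < n"
  shows "B_size (AF n k) = 1"
proof -
  have sm: "small_sets (AF n k) (real (card (base_set (AF n k))) / 2) = SmF k" using AF_small[OF assms(2) assms(1)] .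
  have "B_set (AF n k) = base_set (SmF k)" unfolding B_set_def sm ..
  then have Bs: "B_set (AF n k) = {1..k}" unfolding base_set_def using SmF_union assms by simp
  have fin: "finite (SmF k)"
  proof -
    have "SmF k \<subseteq> Pow {1..k}" using SmF_sub by blast
    then show ?thesis by (rule finite_subset) simp
  qed
  show ?thesis unfolding B_size_def sm Bs
  proof (rule Least_equality)
    have "{1..k} \<in> SmF k" by (simp add: SmF_def)
    moreover have "irredundant {{1..k}}" using assms by (auto simp: irredundant_def irr_def base_set_def)
    ultimately show "\<exists>S\<subseteq>SmF k. irredundant S \<and> base_set S = {1..k} \<and> card S = 1"
      by (intro exI[of _ "{{1..k}}"]) (auto simp: base_set_def)
  next
    fix m assume "\<exists>S\<subseteq>SmF k. irredundant S \<and> base_set S = {1..k} \<and> card S = m"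
    then obtain S where S: "S \<subseteq> SmF k" "base_set S = {1..k}" "card S = m" by blast
    have "finite S" using S(1) fin finite_subset by blast
    show "1 \<le> m"
    proof (rule ccontr)
      assume "\<not> 1 \<le> m"
      then have "card S = 0" using S(3) by simp
      then have "S = {}" using \<open>finite S\<close> by simp
      then show False using S(2) assms by (simp add: base_set_def)
    qed
  qed
qed




lemma arith_odd:
  fixes c k n :: int
  assumes "2 * c = k * (k - 1)" "4 \<le> k" "n = 2 * k + 1"
  shows "2 * ((k - 2) * c + (k - 1) * k + k + (n - k - 1) * (n - 1) + n) < n * (c + k + 1 + (n - k - 1) + 1)"
proof -
  have "4 * k \<le> k * k" using mult_right_mono[of 4 k k] assms(2) by simp
  then show ?thesis using assms by (simp add: algebra_simps; linarith)
qed

lemma arith_even: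
  fixes c k n :: int
  assumes "2 * c = k * (k - 1)" "4 \<le> k" "n = 2 * k + 2"
  shows "2 * ((k - 2) * c + (k - 1) * k + k + (n - k - 1) * (n - 1) + n) < n * (c + k + 1 + (n - k - 1) + 1)"
proof -
  have "4 * k \<le> k * k" using mult_right_mono[of 4 k k] assms(2) by simp
  then show ?thesis using assms by (simp add: algebra_simps; linarith)
qed


definition Fs :: "nat \<Rightarrow> nat \<Rightarrow> nat set set" where
  "Fs k j = {S. S \<subseteq> {1..k} \<and> card S = j}"

lemma Fs_finite: "finite (Fs k j)"
proof -
  have "Fs k j \<subseteq> Pow {1..k}" by (auto simp: Fs_def)
  then show ?thesis by (rule finite_subset) simp
qed

lemma Fs_card: "card (Fs k j) = k choose j"
  unfolding Fs_def using n_subsets[of "{1..k}" j] by simp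

lemma Fs_sum: "(\<Sum>X\<in>Fs k j. card X) = j * (k choose j)"
proof -
  have "(\<Sum>X\<in>Fs k j. card X) = (\<Sum>X\<in>Fs k j. j)" by (rule sum.cong) (auto simp: Fs_def)
  also have "\<dots> = card (Fs k j) * j" by simp
  finally show ?thesis using Fs_card by simp
qed

lemma Fs_disj: "i \<noteq> j \<Longrightarrow> Fs k i \<inter> Fs k j = {}"
  by (auto simp: Fs_def)

lemma SmF_split:
  assumes "2 \<le> k"
  shows "SmF k = Fs k (k-2) \<union> Fs k (k-1) \<union> Fs k k"
proof (intro equalityI subsetI)
  fix S assume S: "S \<in> SmF k"
  then have "card S \<le> k" "k - 2 \<le> card S" by (auto simp: SmF_card SmF_def)
  then have "card S = k - 2 \<or> card S = k - 1 \<or> card S = k" by auto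
  then show "S \<in> Fs k (k-2) \<union> Fs k (k-1) \<union> Fs k k" using SmF_sub[OF S] by (auto simp: Fs_def)
next
  fix S assume "S \<in> Fs k (k-2) \<union> Fs k (k-1) \<union> Fs k k"
  then show "S \<in> SmF k" by (auto simp: Fs_def SmF_def)
qed

lemma SmF_counts:
  assumes "2 \<le> k"
  shows "card (SmF k) = (k choose 2) + k + 1"
    and "(\<Sum>X\<in>SmF k. card X) = (k - 2) * (k choose 2) + (k - 1) * k + k"
proof -
  have e1: "Fs k (k-2) \<inter> Fs k k = {}" by (rule Fs_disj) (use assms in simp)
  have e2: "Fs k (k-1) \<inter> Fs k k = {}" by (rule Fs_disj) (use assms in simp)
  have d1: "(Fs k (k-2) \<union> Fs k (k-1)) \<inter> Fs k k = {}" using e1 e2 by blast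
  have d2: "Fs k (k-2) \<inter> Fs k (k-1) = {}" by (rule Fs_disj) (use assms in simp)
  have c1: "k choose (k - 2) = k choose 2" using binomial_symmetric[of 2 k] assms by simp
  have c2: "k choose (k - 1) = k" using binomial_symmetric[of 1 k] assms by simp
  have fa: "finite (Fs k (k-2) \<union> Fs k (k-1))" "finite (Fs k k)" "finite (Fs k (k-2))" "finite (Fs k (k-1))"
    by (simp_all add: Fs_finite)
  have "card (SmF k) = card (Fs k (k-2) \<union> Fs k (k-1)) + card (Fs k k)"
    unfolding SmF_split[OF assms] by (rule card_Un_disjoint[OF fa(1,2) d1])
  also have "card (Fs k (k-2) \<union> Fs k (k-1)) = card (Fs k (k-2)) + card (Fs k (k-1))"
    by (rule card_Un_disjoint[OF fa(3,4) d2])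
  finally show "card (SmF k) = (k choose 2) + k + 1" unfolding Fs_card c1 c2 by simp
  have "(\<Sum>X\<in>SmF k. card X) = (\<Sum>X\<in>Fs k (k-2) \<union> Fs k (k-1). card X) + (\<Sum>X\<in>Fs k k. card X)"
    unfolding SmF_split[OF assms] by (rule sum.union_disjoint[OF fa(1,2) d1])
  also have "(\<Sum>X\<in>Fs k (k-2) \<union> Fs k (k-1). card X) = (\<Sum>X\<in>Fs k (k-2). card X) + (\<Sum>X\<in>Fs k (k-1). card X)"
    by (rule sum.union_disjoint[OF fa(3,4) d2])
  finally show "(\<Sum>X\<in>SmF k. card X) = (k - 2) * (k choose 2) + (k - 1) * k + k" unfolding Fs_sum c1 c2 by simp
qed

lemma LgF_counts:
  shows "card (LgF n k) = n - k - 1"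
    and "(\<Sum>X\<in>LgF n k. card X) = (n - k - 1) * (n - 1)"
proof -
  have inj: "inj_on (\<lambda>c. {1..n} - {c}) {k+1..<n}"
  proof (rule inj_onI)
    fix c d assume c: "c \<in> {k+1..<n}" and d: "d \<in> {k+1..<n}" and eq: "{1..n} - {c} = {1..n} - {d}"
    show "c = d"
    proof (rule ccontr)
      assume "c \<noteq> d"
      moreover have "d \<in> {1..n}" using d by simp
      ultimately have "d \<in> {1..n} - {c}" by simp
      then have "d \<in> {1..n} - {d}" by (simp only: eq)
      then show False by simp
    qed
  qed
  show cc: "card (LgF n k) = n - k - 1" unfolding LgF_def using card_image[OF inj] by simp
  have "(\<Sum>X\<in>LgF n k. card X) = (\<Sum>X\<in>LgF n k. n - 1)" by (rule sum.cong) (auto simp: LgF_card)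
  then show "(\<Sum>X\<in>LgF n k. card X) = (n - k - 1) * (n - 1)" using cc by simp
qed




lemma arith_nat:
  fixes c k n :: nat
  assumes "2 * c = k * (k - 1)" "4 \<le> k" "2 * k < n" "n \<le> 2 * k + 2"
  shows "2 * ((k - 2) * c + (k - 1) * k + k + (n - k - 1) * (n - 1) + n) < n * (c + k + 1 + (n - k - 1) + 1)"
proof -
  obtain j where j: "k = j + 4" using assms(2) by (metis add.commute le_Suc_ex)
  have "n = 2 * k + 1 \<or> n = 2 * k + 2" using assms by auto
  then show ?thesis
  proof
    assume n: "n = 2 * k + 1"
    have e: "2 * c = (j + 4) * (j + 3)" using assms(1) j by simp
    show ?thesis unfolding n j using e by (simp add: algebra_simps)
  next
    assume n: "n = 2 * k + 2"
    have e: "2 * c = (j + 4) * (j + 3)" using assms(1) j by simp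
    show ?thesis unfolding n j using e by (simp add: algebra_simps)
  qed
qed


lemma choose2_double: "2 * (k choose 2) = k * (k - 1)"
proof (induction k)
  case 0 then show ?case by simp
next
  case (Suc k)
  have "(Suc k choose 2) = (k choose 1) + (k choose 2)" by (simp add: numeral_2_eq_2)
  then show ?case using Suc by (cases k) (simp_all add: algebra_simps)
qed

lemma AF_avg:
  assumes "4 \<le> k" "2 * k < n" "n \<le> 2 * k + 2"
  shows "avg_size (AF n k) < real n / 2"
proof -
  have k2: "2 \<le> k" using assms by simp
  have finS: "finite (SmF k)"
  proof -
    have "SmF k \<subseteq> Pow {1..k}" using SmF_sub by blast
    then show ?thesis by (rule finite_subset) simp
  qed
  have finL: "finite (LgF n k)" by (simp add: LgF_def)
  have dSL: "SmF k \<inter> LgF n k = {}"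
  proof (rule ccontr)
    assume "SmF k \<inter> LgF n k \<noteq> {}"
    then obtain X where X: "X \<in> SmF k" "X \<in> LgF n k" by blast
    have "card X \<le> k" "card X = n - 1" using SmF_card[OF X(1)] LgF_card[OF X(2)] by auto
    then show False using assms by simp
  qed
  have dT: "(SmF k \<union> LgF n k) \<inter> {{1..n}} = {}"
  proof (rule ccontr)
    assume "(SmF k \<union> LgF n k) \<inter> {{1..n}} \<noteq> {}"
    then have "{1..n} \<in> SmF k \<or> {1..n} \<in> LgF n k" by blast
    then have "n \<le> k \<or> n = n - 1" using SmF_card[of "{1..n}" k] LgF_card[of "{1..n}" n k] by auto
    then show False using assms by simp
  qed
  have cA: "card (AF n k) = card (SmF k) + card (LgF n k) + 1"
    unfolding AF_def
    using card_Un_disjoint[OF _ _ dT] card_Un_disjoint[OF finS finL dSL] finS finL by simp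
  have sA: "(\<Sum>X\<in>AF n k. card X) = (\<Sum>X\<in>SmF k. card X) + (\<Sum>X\<in>LgF n k. card X) + n"
    unfolding AF_def
    using sum.union_disjoint[OF _ _ dT, of card] sum.union_disjoint[OF finS finL dSL, of card] finS finL by simp
  define c where "c = k choose 2"
  have c2: "2 * c = k * (k - 1)" unfolding c_def by (rule choose2_double)
  have cA': "card (AF n k) = c + k + 1 + (n - k - 1) + 1"
    using cA SmF_counts(1)[OF k2] LgF_counts(1) unfolding c_def by simp
  have sA': "(\<Sum>X\<in>AF n k. card X) = (k - 2) * c + (k - 1) * k + k + (n - k - 1) * (n - 1) + n"
    using sA SmF_counts(2)[OF k2] LgF_counts(2) unfolding c_def by simp
  have ineq: "2 * (\<Sum>X\<in>AF n k. card X) < n * card (AF n k)"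
    unfolding cA' sA' using arith_nat[OF c2 assms] .
  have pos: "0 < card (AF n k)" using cA by simp
  have "avg_size (AF n k) = real (\<Sum>X\<in>AF n k. card X) / real (card (AF n k))"
    unfolding avg_size_def by simp
  also have "\<dots> < real n / 2"
  proof -
    have "real (2 * (\<Sum>X\<in>AF n k. card X)) < real (n * card (AF n k))" using ineq by linarith
    then have "2 * real (\<Sum>X\<in>AF n k. card X) < real n * real (card (AF n k))" by simp
    then show ?thesis using pos by (simp add: divide_simps)
  qed
  finally show ?thesis .
qed

theorem lemma3p1:
  fixes n :: nat
  assumes "n \<ge> 9"
  shows "\<exists>A :: nat set set. union_closed A \<and> base_set A = {1..n} \<and> separating A \<and>
           height A = 5 \<and> B_size A = 1 \<and> avg_size A < real n / 2"
proof -
  define k where "k = (n - 1) div 2"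
  have k4: "4 \<le> k" using assms unfolding k_def by simp
  have k2n: "2 * k < n" using assms unfolding k_def by simp
  have nk: "n \<le> 2 * k + 2" using assms unfolding k_def by simp
  have kn: "k < n" "k + 1 < n" "2 \<le> k" "1 \<le> n" using k4 k2n by simp_all
  show ?thesis
  proof (intro exI[of _ "AF n k"] conjI)
    show "union_closed (AF n k)" using AF_uc kn by simp
    show "base_set (AF n k) = {1..n}" using AF_base kn by simp
    show "separating (AF n k)" using AF_sep kn by simp
    show "height (AF n k) = 5" using AF_height k4 kn by simp
    show "B_size (AF n k) = 1" using AF_Bsize k4 k2n by simp
    show "avg_size (AF n k) < real n / 2" using AF_avg k4 k2n nk by simp
  qed
qed


end
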